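(* Let $n\ge1$ be an integer and $x\in\{0,1,\dots,n\}$ an observed value of $X\sim B(n,p)$. For $\alpha\in(0,1)$ let the prior of $p$ be the triangle distribution with mode $\alpha$, $$\pi(p)=\begin{cases}\frac{2}{\alpha}p, & 0<p\le\alpha,\\ \frac{2}{1-\alpha}(1-p), & \alpha<p<1,\end{cases}$$ and let $g(\alpha)$ be the corresponding posterior mean of $p$: $$g(\alpha)=\frac{\frac{2}{\alpha}\int_0^\alpha p^{x+2}(1-p)^{n-x}\,dp+\frac{2}{1-\alpha}\int_\alpha^1 p^{x+1}(1-p)^{n-x+1}\,dp}{\frac{2}{\alpha}\int_0^\alpha p^{x+1}(1-p)^{n-x}\,dp+\frac{2}{1-\alpha}\int_\alpha^1 p^{x}(1-p)^{n-x+1}\,dp}.$$ Then the iterative limit obtained by replacing the mode $\alpha$ of the prior with the posterior mean on every iteration, namely a point $\tau\in(0,1)$ with $g(\tau)=\tau$, exists and is unique.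
   Context: $B(n,p)$ is the binomial distribution with $n$ trials and success probability $p\in(0,1)$. The iterative limit (iterative Bayes estimate) is by definition a value $\tau\in(0,1)$ at which the prior mode coincides with the posterior mean, i.e. $g(\tau)=\tau$. *)

theory Defs
  imports "HOL-Analysis.Analysis"
begin

definition tri_post_mean :: "nat \<Rightarrow> nat \<Rightarrow> real \<Rightarrow> real" where
  "tri_post_mean n x \<alpha> =
     ((2 / \<alpha>) * integral {0..\<alpha>} (\<lambda>p. p ^ (x + 2) * (1 - p) ^ (n - x))
      + (2 / (1 - \<alpha>)) * integral {\<alpha>..1} (\<lambda>p. p ^ (x + 1) * (1 - p) ^ (n - x + 1)))
     / ((2 / \<alpha>) * integral {0..\<alpha>} (\<lambda>p. p ^ (x + 1) * (1 - p) ^ (n - x))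
      + (2 / (1 - \<alpha>)) * integral {\<alpha>..1} (\<lambda>p. p ^ x * (1 - p) ^ (n - x + 1)))"

end

theory Submission
  imports Defs
begin

lemma rolle01:
  fixes h h' :: "real \<Rightarrow> real"
  assumes d: "\<And>t. t \<in> {0..1} \<Longrightarrow> (h has_real_derivative h' t) (at t within {0..1})"
    and u: "0 \<le> u" "u < v" "v \<le> 1" "h u = h v"
  shows "\<exists>z. u < z \<and> z < v \<and> h' z = 0"
proof -
  have c: "continuous_on {0..1} h" by (rule DERIV_continuous_on[OF d])
  have c2: "continuous_on {u..v} h" by (rule continuous_on_subset[OF c]) (use u in auto)
  have D: "DERIV h z :> h' z" if "u < z" "z < v" for z
    using d[of z] at_within_Icc_at[of 0 z 1] that u by auto
  obtain z where z: "u < z" "z < v" "DERIV h z :> 0"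
    using Rolle[OF u(2) u(4) c2] D real_differentiable_def by blast
  then show ?thesis using D DERIV_unique by blast
qed

lemma incr01:
  fixes h h' :: "real \<Rightarrow> real"
  assumes d: "\<And>t. t \<in> {0..1} \<Longrightarrow> (h has_real_derivative h' t) (at t within {0..1})"
    and u: "0 \<le> u" "u < v" "v \<le> 1" and pos: "\<And>t. u < t \<Longrightarrow> t < v \<Longrightarrow> h' t > 0"
  shows "h u < h v"
proof -
  have c: "continuous_on {0..1} h" by (rule DERIV_continuous_on[OF d])
  have c2: "continuous_on {u..v} h" by (rule continuous_on_subset[OF c]) (use u in auto)
  have D: "DERIV h z :> h' z" if "u < z" "z < v" for z
    using d[of z] at_within_Icc_at[of 0 z 1] that u by auto
  show ?thesis
    by (rule DERIV_pos_imp_increasing_open[OF u(2) _ c2]) (use D pos in blast)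
qed

theorem theorem2:
  fixes n x :: nat
  assumes "n \<ge> 1" and "x \<le> n"
  shows "\<exists>!\<tau>::real. 0 < \<tau> \<and> \<tau> < 1 \<and> tri_post_mean n x \<tau> = \<tau>"
proof -
  define f :: "real \<Rightarrow> real" where "f p = p ^ x * (1 - p) ^ (n - x)" for p
  define F :: "nat \<Rightarrow> real \<Rightarrow> real" where "F j t = integral {0..t} (\<lambda>p. p ^ j * f p)" for j t
  have cont: "continuous_on S (\<lambda>p. p ^ j * f p)" for S j
    unfolding f_def by (intro continuous_intros)
  have dF: "(F j has_real_derivative t ^ j * f t) (at t within {0..1})" if "t \<in> {0..1}" for j t
    unfolding F_def by (rule integral_has_real_derivative[OF cont that])
  have F0: "F j 0 = 0" for j unfolding F_def by simp
  have fpos: "f p > 0" if "0 < p" "p < 1" for p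
    unfolding f_def using that by simp
  have tail: "integral {t..1} (\<lambda>p. p ^ j * f p) = F j 1 - F j t" if "0 \<le> t" "t \<le> 1" for j t
    using Henstock_Kurzweil_Integration.integral_combine[OF that integrable_continuous_interval[OF cont]]
    unfolding F_def by (simp add: algebra_simps)
  have tail2: "integral {t..1} (\<lambda>p. p ^ i * f p - p ^ j * f p) = (F i 1 - F i t) - (F j 1 - F j t)"
    if "0 \<le> t" "t \<le> 1" for i j t
    by (simp add: integral_diff integrable_continuous_interval[OF cont] tail[OF that])
  define a where "a = F 1 1 - F 2 1"
  define b where "b = F 0 1 - F 1 1"
  define K where "K t = F 2 t - 2*t*F 1 t + t^2*F 0 t + a*t - b*t^2" for t
  define K1 where "K1 t = 2*t*F 0 t - 2*F 1 t + a - 2*b*t" for t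
  define K2 where "K2 t = 2*F 0 t - 2*b" for t
  have dK: "(K has_real_derivative K1 t) (at t within {0..1})" if t: "t \<in> {0..1}" for t
    unfolding K_def[abs_def]
    apply (rule derivative_eq_intros dF[OF t] refl)+
    apply (simp add: K1_def algebra_simps power2_eq_square)
    done
  have dK1: "(K1 has_real_derivative K2 t) (at t within {0..1})" if t: "t \<in> {0..1}" for t
    unfolding K1_def[abs_def]
    apply (rule derivative_eq_intros dF[OF t] refl)+
    apply (simp add: K2_def algebra_simps power2_eq_square)
    done
  have dH1: "((\<lambda>t. F 0 t - F 1 t) has_real_derivative (1 - t) * f t) (at t within {0..1})"
    if t: "t \<in> {0..1}" for t
    apply (rule derivative_eq_intros dF[OF t] refl)+
    apply (simp add: algebra_simps)
    done
  have dH2: "((\<lambda>t. F 1 t - F 2 t) has_real_derivative t * (1 - t) * f t) (at t within {0..1})"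
    if t: "t \<in> {0..1}" for t
    apply (rule derivative_eq_intros dF[OF t] refl)+
    apply (simp add: algebra_simps power2_eq_square)
    done
  have H1: "F 0 u - F 1 u < F 0 v - F 1 v" if "0 \<le> u" "u < v" "v \<le> 1" for u v
    by (rule incr01[OF dH1 that]) (use fpos that in \<open>auto intro!: mult_pos_pos\<close>)
  have H2: "F 1 u - F 2 u < F 1 v - F 2 v" if "0 \<le> u" "u < v" "v \<le> 1" for u v
    by (rule incr01[OF dH2 that]) (use fpos that in \<open>auto intro!: mult_pos_pos\<close>)
  have M0: "F 0 u < F 0 v" if "0 \<le> u" "u < v" "v \<le> 1" for u v
    by (rule incr01[OF dF that]) (use fpos that in \<open>auto intro!: mult_pos_pos\<close>)
  have M1: "F 1 u < F 1 v" if "0 \<le> u" "u < v" "v \<le> 1" for u v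
    by (rule incr01[OF dF that]) (use fpos that in \<open>auto intro!: mult_pos_pos\<close>)
  have apos: "a > 0" using H2[of 0 1] by (simp add: a_def F0)
  have bpos: "b > 0" using H1[of 0 1] by (simp add: b_def F0)
  have K0: "K 0 = 0" by (simp add: K_def F0)
  have K1': "K 1 = 0" by (simp add: K_def a_def b_def)
  have equiv: "tri_post_mean n x t = t \<longleftrightarrow> K t = 0" if t: "0 < t" "t < 1" for t
  proof -
    have e1: "(\<lambda>p. p ^ (x + 2) * (1 - p) ^ (n - x)) = (\<lambda>p. p ^ 2 * f p)"
      by (rule ext) (simp add: f_def power_add power2_eq_square mult_ac)
    have e3: "(\<lambda>p. p ^ (x + 1) * (1 - p) ^ (n - x)) = (\<lambda>p. p ^ 1 * f p)"
      by (rule ext) (simp add: f_def power_add power2_eq_square mult_ac)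
    have e2: "(\<lambda>p. p ^ (x + 1) * (1 - p) ^ (n - x + 1)) = (\<lambda>p. p ^ 1 * f p - p ^ 2 * f p)"
      by (rule ext) (simp add: f_def power_add power2_eq_square algebra_simps power2_eq_square)
    have e4: "(\<lambda>p. p ^ x * (1 - p) ^ (n - x + 1)) = (\<lambda>p. p ^ 0 * f p - p ^ 1 * f p)"
      by (rule ext) (simp add: f_def power_add power2_eq_square algebra_simps)
    define I1 where "I1 = F 2 t"
    define I3 where "I3 = F 1 t"
    define I2 where "I2 = (F 1 1 - F 1 t) - (F 2 1 - F 2 t)"
    define I4 where "I4 = (F 0 1 - F 0 t) - (F 1 1 - F 1 t)"
    have tp: "tri_post_mean n x t = (2/t*I1 + 2/(1-t)*I2) / (2/t*I3 + 2/(1-t)*I4)"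
      unfolding tri_post_mean_def e1 e2 e3 e4 tail2[OF less_imp_le[OF t(1)] less_imp_le[OF t(2)]]
      by (simp add: I1_def I2_def I3_def I4_def F_def)
    have I3p: "I3 > 0" using M1[of 0 t] t by (simp add: I3_def F0)
    have I4p: "I4 > 0" using H1[of t 1] t by (simp add: I4_def algebra_simps)
    have Dp: "2/t*I3 + 2/(1-t)*I4 > 0" using I3p I4p t by (simp add: add_pos_pos)
    have KI: "K t = (1-t)*I1 + t*I2 - t*(1-t)*I3 - t^2*I4"
      by (simp add: K_def I1_def I2_def I3_def I4_def a_def b_def algebra_simps power2_eq_square)
    have "tri_post_mean n x t = t \<longleftrightarrow> 2/t*I1 + 2/(1-t)*I2 = t * (2/t*I3 + 2/(1-t)*I4)"
      using Dp unfolding tp by (simp add: divide_eq_eq)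
    also have "\<dots> \<longleftrightarrow> (1-t)*I1 + t*I2 - t*(1-t)*I3 - t^2*I4 = 0"
      using t by (simp add: field_simps power2_eq_square) argo
    finally show ?thesis using KI by simp
  qed
  have uniq: False if st: "0 < s" "s < t" "t < 1" "K s = 0" "K t = 0" for s t
  proof -
    obtain c1 where c1: "0 < c1" "c1 < s" "K1 c1 = 0"
      using rolle01[OF dK, of 0 s] st K0 by auto
    obtain c2 where c2: "s < c2" "c2 < t" "K1 c2 = 0"
      using rolle01[OF dK, of s t] st by auto
    obtain c3 where c3: "t < c3" "c3 < 1" "K1 c3 = 0"
      using rolle01[OF dK, of t 1] st K1' by auto
    obtain d1 where d1: "c1 < d1" "d1 < c2" "K2 d1 = 0"
      using rolle01[OF dK1, of c1 c2] c1 c2 st by auto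
    obtain d2 where d2: "c2 < d2" "d2 < c3" "K2 d2 = 0"
      using rolle01[OF dK1, of c2 c3] c2 c3 st by auto
    have "F 0 d1 < F 0 d2" using M0[of d1 d2] d1 d2 c1 c3 by auto
    then show False using d1 d2 by (simp add: K2_def)
  qed
  have cK1: "continuous_on {0..1} K1" by (rule DERIV_continuous_on[OF dK1])
  have K10: "K1 0 = a" by (simp add: K1_def F0)
  have K11: "K1 1 = a" by (simp add: K1_def b_def)
  obtain d where d: "d > 0" "\<And>t. t \<in> {0..1} \<Longrightarrow> dist t 0 < d \<Longrightarrow> dist (K1 t) (K1 0) < a"
    using cK1 apos unfolding continuous_on_iff by (metis atLeastAtMost_iff order_refl zero_le_one)
  obtain e where e: "e > 0" "\<And>t. t \<in> {0..1} \<Longrightarrow> dist t 1 < e \<Longrightarrow> dist (K1 t) (K1 1) < a"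
    using cK1 apos unfolding continuous_on_iff by (metis atLeastAtMost_iff order_refl zero_le_one)
  define u where "u = min (d/2) (1/2)"
  define w where "w = max (1 - e/2) (1/2)"
  have u: "0 < u" "u < 1" using d by (auto simp: u_def)
  have w: "0 < w" "w < 1" using e by (auto simp: w_def)
  have Ku: "K 0 < K u"
  proof (rule incr01[OF dK])
    fix t assume "0 < t" "t < u"
    then have "dist (K1 t) (K1 0) < a" using d(2)[of t] u by (auto simp: dist_real_def u_def)
    then show "K1 t > 0" using K10 by (auto simp: dist_real_def)
  qed (use u in auto)
  have Kw: "K w < K 1"
  proof (rule incr01[OF dK])
    fix t assume "w < t" "t < 1"
    then have "dist (K1 t) (K1 1) < a" using e(2)[of t] w by (auto simp: dist_real_def w_def)
    then show "K1 t > 0" using K11 by (auto simp: dist_real_def)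
  qed (use w in auto)
  have cK: "continuous_on {0..1} K" by (rule DERIV_continuous_on[OF dK])
  have ex: "\<exists>t. 0 < t \<and> t < 1 \<and> K t = 0"
  proof (cases "u \<le> w")
    case True
    have "continuous_on {u..w} K" by (rule continuous_on_subset[OF cK]) (use u w in auto)
    then obtain z where "u \<le> z" "z \<le> w" "K z = 0"
      using IVT2'[of K w 0 u] Ku Kw K0 K1' True by auto
    then show ?thesis using u w by (intro exI[of _ z]) auto
  next
    case False
    have "continuous_on {w..u} K" by (rule continuous_on_subset[OF cK]) (use u w in auto)
    then obtain z where "w \<le> z" "z \<le> u" "K z = 0"
      using IVT'[of K w 0 u] Ku Kw K0 K1' False by auto
    then show ?thesis using u w by (intro exI[of _ z]) auto
  qed
  show ?thesis
  proof (rule ex_ex1I)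
    show "\<exists>t. 0 < t \<and> t < 1 \<and> tri_post_mean n x t = t" using ex equiv by blast
  next
    fix s t assume "0 < s \<and> s < 1 \<and> tri_post_mean n x s = s" "0 < t \<and> t < 1 \<and> tri_post_mean n x t = t"
    then have "0 < s" "s < 1" "K s = 0" "0 < t" "t < 1" "K t = 0" using equiv by auto
    then show "s = t" using uniq[of s t] uniq[of t s] by (cases "s < t"; cases "t < s") auto
  qed
qed
end
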